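(* Let $J$ be a non-degenerate interval, $f_{1,\infty}$ an $m$-periodic sequence of continuous surjective self-maps of $J$, and $g=f_m\circ\cdots\circ f_1$. If the autonomous system $(J,g)$ is topologically transitive, then $(J,f_{1,\infty})$ is Devaney chaotic.
   Context: $m$-periodic: $f_{n+m}=f_n$ for all $n$. Write $f_1^n=f_n\circ\cdots\circ f_1$. For the non-autonomous system: topologically transitive means for all non-empty open $U,V$ some $n$ with $f_1^n(U)\cap V\ne\emptyset$; a point $x$ is periodic if there is $n$ with $f_1^{nk}(x)=x$ for all $k\in\mathbb{N}$; sensitive means there is $\delta>0$ such that for every $x$ and neighbourhood $U$ of $x$ there exist $y\in U$, $n$ with $|f_1^n(x)-f_1^n(y)|>\delta$; Devaney chaotic means topologically transitive, dense periodic points, and sensitive. *)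

theory Defs
  imports "HOL-Analysis.Analysis"
begin

fun nacomp :: "(nat \<Rightarrow> real \<Rightarrow> real) \<Rightarrow> nat \<Rightarrow> real \<Rightarrow> real" where
  "nacomp f 0 = id"
| "nacomp f (Suc n) = f (Suc n) \<circ> nacomp f n"

definition nondegenerate_interval :: "real set \<Rightarrow> bool" where
  "nondegenerate_interval J \<longleftrightarrow> is_interval J \<and> (\<exists>a\<in>J. \<exists>b\<in>J. a < b)"

definition top_transitive :: "real set \<Rightarrow> (real \<Rightarrow> real) \<Rightarrow> bool" where
  "top_transitive J g \<longleftrightarrow>
     (\<forall>U V. openin (top_of_set J) U \<and> U \<noteq> {} \<and> openin (top_of_set J) V \<and> V \<noteq> {} \<longrightarrow>
        (\<exists>n\<ge>1. (g ^^ n) ` U \<inter> V \<noteq> {}))"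

definition na_transitive :: "real set \<Rightarrow> (nat \<Rightarrow> real \<Rightarrow> real) \<Rightarrow> bool" where
  "na_transitive J f \<longleftrightarrow>
     (\<forall>U V. openin (top_of_set J) U \<and> U \<noteq> {} \<and> openin (top_of_set J) V \<and> V \<noteq> {} \<longrightarrow>
        (\<exists>n\<ge>1. nacomp f n ` U \<inter> V \<noteq> {}))"

definition na_periodic_point :: "(nat \<Rightarrow> real \<Rightarrow> real) \<Rightarrow> real \<Rightarrow> bool" where
  "na_periodic_point f x \<longleftrightarrow> (\<exists>n\<ge>1. \<forall>k\<ge>1. nacomp f (n * k) x = x)"

definition na_dense_periodic :: "real set \<Rightarrow> (nat \<Rightarrow> real \<Rightarrow> real) \<Rightarrow> bool" where
  "na_dense_periodic J f \<longleftrightarrow> J \<subseteq> closure {x \<in> J. na_periodic_point f x}"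

definition na_sensitive :: "real set \<Rightarrow> (nat \<Rightarrow> real \<Rightarrow> real) \<Rightarrow> bool" where
  "na_sensitive J f \<longleftrightarrow>
     (\<exists>\<delta>>0. \<forall>x\<in>J. \<forall>U. openin (top_of_set J) U \<and> x \<in> U \<longrightarrow>
        (\<exists>y\<in>U. \<exists>n\<ge>1. \<bar>nacomp f n x - nacomp f n y\<bar> > \<delta>))"

definition na_devaney_chaotic :: "real set \<Rightarrow> (nat \<Rightarrow> real \<Rightarrow> real) \<Rightarrow> bool" where
  "na_devaney_chaotic J f \<longleftrightarrow> na_transitive J f \<and> na_dense_periodic J f \<and> na_sensitive J f"

end

theory Submission
  imports Defs
begin


lemma iter_props:
  assumes "continuous_on J g" "g ` J \<subseteq> J"
  shows "continuous_on J (g^^n) \<and> (g^^n) ` J \<subseteq> J"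
proof (induction n)
  case 0 then show ?case by (simp add: continuous_on_id)
next
  case (Suc n)
  then have c: "continuous_on J (g^^n)" and s: "(g^^n) ` J \<subseteq> J" by auto
  have "continuous_on J (g \<circ> g^^n)"
    by (rule continuous_on_compose[OF c continuous_on_subset[OF assms(1) s]])
  moreover have "(g \<circ> g^^n) ` J \<subseteq> J" using s assms(2) by (auto simp: image_subset_iff)
  ultimately show ?case by simp
qed

lemma funpow_fix: "(f^^p) q = q \<Longrightarrow> (f^^(p*k)) q = q"
proof (induction k)
  case 0 then show ?case by simp
next
  case (Suc k)
  have e: "p*Suc k = p*k + p" by simp
  have "(f^^(p*Suc k)) q = (f^^(p*k)) ((f^^p) q)"
    unfolding e funpow_add by simp
  then show ?case using Suc by simp
qed

lemma sign_const:
  fixes h :: "real \<Rightarrow> real"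
  assumes "continuous_on J h" "I \<subseteq> J" "connected I" "\<forall>t\<in>I. h t \<noteq> t"
    "a \<in> I" "b \<in> I" "h a > a"
  shows "h b > b"
proof (rule ccontr)
  assume "\<not> h b > b"
  with assms have hb: "h b - b < 0" by force
  have "continuous_on I (\<lambda>t. h t - t)"
    by (intro continuous_intros continuous_on_subset[OF assms(1) assms(2)])
  then have "connected ((\<lambda>t. h t - t) ` I)" using assms(3) connected_continuous_image by blast
  then have iv: "is_interval ((\<lambda>t. h t - t) ` I)" by (simp add: is_interval_connected_1)
  have "0 \<in> (\<lambda>t. h t - t) ` I"
  proof -
    have m1: "h b - b \<in> (\<lambda>t. h t - t) ` I" using assms(6) by blast
    have m2: "h a - a \<in> (\<lambda>t. h t - t) ` I" using assms(5) by blast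
    have "h b - b \<le> 0" "0 \<le> h a - a" using hb assms(7) by auto
    then show ?thesis using mem_is_interval_1_I[OF iv m1 m2] by blast
  qed
  then show False using assms(4) by auto
qed

lemma pos_mult:
  fixes g :: "real \<Rightarrow> real"
  assumes cg: "continuous_on J g" "g ` J \<subseteq> J" and I: "I \<subseteq> J" "connected I"
    and np: "\<forall>j\<ge>1. \<forall>t\<in>I. (g^^j) t \<noteq> t"
    and p: "p \<ge> 1" "a \<in> I" "(g^^p) a \<in> I" "a < (g^^p) a"
  shows "i \<ge> 1 \<Longrightarrow> u \<in> I \<Longrightarrow> u < (g^^(i*p)) u"
proof (induction i arbitrary: u)
  case 0 then show ?case by simp
next
  case (Suc i)
  have pos: "Suc i * p \<ge> 1" using p by simp
  have cont: "continuous_on J (g^^(Suc i * p))" using iter_props[OF cg] by blast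
  show ?case
  proof (cases "i = 0")
    case True
    then show ?thesis using sign_const[OF cont I, of a u] np p Suc by (auto)
  next
    case False
    have e: "Suc i * p = i*p + p" by simp
      have "(g^^(Suc i * p)) a = (g^^(i*p)) ((g^^p) a)" unfolding e funpow_add by simp
    also have "\<dots> > (g^^p) a" using Suc.IH[of "(g^^p) a"] False p by auto
    finally have "a < (g^^(Suc i * p)) a" using p by auto
    then show ?thesis using sign_const[OF cont I, of a u] np pos p Suc by auto
  qed
qed

lemma neg_mult:
  fixes g :: "real \<Rightarrow> real"
  assumes cg: "continuous_on J g" "g ` J \<subseteq> J" and I: "I \<subseteq> J" "connected I"
    and np: "\<forall>j\<ge>1. \<forall>t\<in>I. (g^^j) t \<noteq> t"
    and p: "p \<ge> 1" "a \<in> I" "(g^^p) a \<in> I" "a > (g^^p) a"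
  shows "i \<ge> 1 \<Longrightarrow> u \<in> I \<Longrightarrow> u > (g^^(i*p)) u"
proof -
  have sc: "\<And>h b c. continuous_on J h \<Longrightarrow> \<forall>t\<in>I. h t \<noteq> t \<Longrightarrow> b \<in> I \<Longrightarrow> c \<in> I \<Longrightarrow> h b < b \<Longrightarrow> h c < c"
  proof -
    fix h :: "real \<Rightarrow> real" and b c
    assume a: "continuous_on J h" "\<forall>t\<in>I. h t \<noteq> t" "b \<in> I" "c \<in> I" "h b < b"
    show "h c < c"
    proof (rule ccontr)
      assume "\<not> h c < c"
      then have "h c > c" using a by force
      then have "h b > b" using sign_const[OF a(1) I a(2) a(4) a(3)] by blast
      then show False using a by simp
    qed
  qed
  show "i \<ge> 1 \<Longrightarrow> u \<in> I \<Longrightarrow> u > (g^^(i*p)) u"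
  proof (induction i arbitrary: u)
    case 0 then show ?case by simp
  next
    case (Suc i)
    have pos: "Suc i * p \<ge> 1" using p by simp
    have cont: "continuous_on J (g^^(Suc i * p))" using iter_props[OF cg] by blast
    show ?case
    proof (cases "i = 0")
      case True
      then show ?thesis using sc[OF cont, of a u] np p Suc by (auto)
    next
      case False
      have e: "Suc i * p = i*p + p" by simp
      have "(g^^(Suc i * p)) a = (g^^(i*p)) ((g^^p) a)" unfolding e funpow_add by simp
      also have "\<dots> < (g^^p) a" using Suc.IH[of "(g^^p) a"] False p by auto
      finally have "a > (g^^(Suc i * p)) a" using p by auto
      then show ?thesis using sc[OF cont, of a u] np pos p Suc by auto
    qed
  qed
qed



lemma nondeg_near:
  fixes J :: "real set"
  assumes "is_interval J" "a\<in>J" "b\<in>J" "a<b" "x\<in>J" "e>0"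
  shows "\<exists>lo hi. lo < hi \<and> {lo..hi} \<subseteq> J \<and> {lo..hi} \<subseteq> ball x e"
proof (cases "x < b")
  case True
  define hi where "hi = min b (x + e/2)"
  have "{x..hi} \<subseteq> J"
  proof
    fix t assume "t \<in> {x..hi}"
    then show "t \<in> J" using mem_is_interval_1_I[OF assms(1) assms(5) assms(3), of t] by (auto simp: hi_def)
  qed
  moreover have "{x..hi} \<subseteq> ball x e" using assms by (auto simp: hi_def dist_real_def)
  moreover have "x < hi" using True assms by (auto simp: hi_def)
  ultimately show ?thesis by blast
next
  case False
  define lo where "lo = max a (x - e/2)"
  have "{lo..x} \<subseteq> J"
  proof
    fix t assume "t \<in> {lo..x}"
    then show "t \<in> J" using mem_is_interval_1_I[OF assms(1) assms(2) assms(5), of t] by (auto simp: lo_def)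
  qed
  moreover have "{lo..x} \<subseteq> ball x e" using assms by (auto simp: lo_def dist_real_def)
  moreover have "lo < x" using False assms by (auto simp: lo_def)
  ultimately show ?thesis by blast
qed

lemma dense_per:
  fixes g :: "real \<Rightarrow> real"
  assumes J: "is_interval J" "a\<in>J" "b\<in>J" "a<b"
    and cg: "continuous_on J g" "g ` J \<subseteq> J" and tr: "top_transitive J g"
    and U: "openin (top_of_set J) U" "x \<in> U"
  shows "\<exists>y\<in>U. \<exists>p\<ge>1. (g^^p) y = y"
proof (rule ccontr)
  assume nper: "\<not> (\<exists>y\<in>U. \<exists>p\<ge>1. (g^^p) y = y)"
  from U obtain e where e: "e > 0" "\<forall>y\<in>J. dist y x < e \<longrightarrow> y \<in> U"
    unfolding openin_euclidean_subtopology_iff by blast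
  have xJ: "x \<in> J" using U openin_imp_subset by blast
  obtain lo hi where lh: "lo < hi" "{lo..hi} \<subseteq> J" "{lo..hi} \<subseteq> ball x e"
    using nondeg_near[OF J xJ e(1)] by blast
  have IU: "{lo..hi} \<subseteq> U" using lh e by (force simp: dist_commute)
  have np: "\<forall>j\<ge>1. \<forall>t\<in>{lo..hi}. (g^^j) t \<noteq> t" using nper IU by blast
  define l where "l = hi - lo"
  define L where "L = J \<inter> {lo<..<lo+l/3}"
  define R where "R = J \<inter> {hi-l/3<..<hi}"
  have oL: "openin (top_of_set J) L" unfolding L_def by (rule openin_open_Int) simp
  have oR: "openin (top_of_set J) R" unfolding R_def by (rule openin_open_Int) simp
  have "lo + l/6 \<in> {lo..hi}" using lh unfolding l_def by (auto simp: field_simps)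
  then have "lo + l/6 \<in> L" using lh unfolding L_def l_def by (auto simp: field_simps)
  then have neL: "L \<noteq> {}" by blast
  have "hi - l/6 \<in> {lo..hi}" using lh unfolding l_def by (auto simp: field_simps)
  then have "hi - l/6 \<in> R" using lh unfolding R_def l_def by (auto simp: field_simps)
  then have neR: "R \<noteq> {}" by blast
  have LI: "L \<subseteq> {lo..hi}" "R \<subseteq> {lo..hi}" using lh unfolding L_def R_def l_def by (auto simp: field_simps)
  have LR: "\<And>u v. u \<in> L \<Longrightarrow> v \<in> R \<Longrightarrow> u < v" using lh unfolding L_def R_def l_def by (auto simp: field_simps)
  obtain n where n: "n \<ge> 1" "(g^^n) ` L \<inter> R \<noteq> {}"
    using tr oL oR neL neR unfolding top_transitive_def by blast
  then obtain u where u: "u \<in> L" "(g^^n) u \<in> R" by blast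
  obtain k where k: "k \<ge> 1" "(g^^k) ` R \<inter> L \<noteq> {}"
    using tr oL oR neL neR unfolding top_transitive_def by blast
  then obtain v where v: "v \<in> R" "(g^^k) v \<in> L" by blast
  have c: "connected {lo..hi}" by simp
  have 1: "v < (g^^(k*n)) v"
    by (rule pos_mult[OF cg lh(2) c np n(1), of u k]) (use u v LI LR k in auto)
  have 2: "v > (g^^(n*k)) v"
    by (rule neg_mult[OF cg lh(2) c np k(1), of v n]) (use u v LI LR n in auto)
  show False using 1 2 by (simp add: mult.commute)
qed



lemma orbit_finite:
  assumes "p \<ge> 1" "(f^^p) q = q"
  shows "finite (range (\<lambda>i. (f^^i) q))"
proof -
  have "range (\<lambda>i. (f^^i) q) \<subseteq> (\<lambda>i. (f^^i) q) ` {..<p}"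
  proof
    fix y assume "y \<in> range (\<lambda>i. (f^^i) q)"
    then obtain i where y: "y = (f^^i) q" by blast
    have e: "i = i mod p + p * (i div p)" by simp
    have "(f^^i) q = (f^^(i mod p)) ((f^^(p * (i div p))) q)"
      by (subst e, simp only: funpow_add o_apply)
    also have "\<dots> = (f^^(i mod p)) q" using funpow_fix[OF assms(2)] by simp
    finally show "y \<in> (\<lambda>i. (f^^i) q) ` {..<p}" using y assms(1) by auto
  qed
  then show ?thesis by (rule finite_subset) simp
qed

lemma sens:
  fixes g :: "real \<Rightarrow> real"
  assumes J: "is_interval J" "a\<in>J" "b\<in>J" "a<b"
    and cg: "continuous_on J g" "g ` J \<subseteq> J" and tr: "top_transitive J g"
  shows "\<exists>\<delta>>0. \<forall>x\<in>J. \<forall>U. openin (top_of_set J) U \<and> x \<in> U \<longrightarrow>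
          (\<exists>y\<in>U. \<exists>N\<ge>1. \<delta> < \<bar>(g^^N) x - (g^^N) y\<bar>)"
proof -
  have dp: "\<And>U x. openin (top_of_set J) U \<Longrightarrow> x \<in> U \<Longrightarrow> \<exists>y\<in>U. \<exists>p\<ge>1. (g^^p) y = y"
    using dense_per[OF J cg tr] by blast
  have ip: "\<And>n. continuous_on J (g^^n) \<and> (g^^n) ` J \<subseteq> J" using iter_props[OF cg] by blast
  have oJJ: "openin (top_of_set J) J" by simp
  from dp[OF oJJ J(2)] obtain q1 where q1a: "q1 \<in> J" and ex1: "\<exists>p\<ge>1. (g^^p) q1 = q1" by (rule bexE)
  from ex1 obtain p1 where q1b: "p1 \<ge> 1" "(g^^p1) q1 = q1" by (elim exE conjE)
  have q1: "q1 \<in> J" "p1 \<ge> 1" "(g^^p1) q1 = q1" using q1a q1b by simp_all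
  define O1 where "O1 = range (\<lambda>i. (g^^i) q1)"
  have fO1: "finite O1" unfolding O1_def by (rule orbit_finite[OF q1(2) q1(3)])
  have "{a..b} \<subseteq> J"
  proof
    fix t assume "t \<in> {a..b}"
    then have "a \<le> t" "t \<le> b" by simp_all
    then show "t \<in> J" by (rule mem_is_interval_1_I[OF J(1) J(2) J(3)])
  qed
  then have "infinite J" using infinite_Icc[OF J(4)] finite_subset by (metis)
  then have "infinite (J - O1)" by (rule Diff_infinite_finite[OF fO1])
  then have neJ: "J - O1 \<noteq> {}" by (metis finite.emptyI)
  have oJ: "openin (top_of_set J) (J \<inter> - O1)"
    by (rule openin_open_Int) (simp add: fO1 finite_imp_closed open_Compl)
  obtain z where zJ: "z \<in> J \<inter> - O1" using neJ by blast
  from dp[OF oJ zJ] obtain q2 where q2a: "q2 \<in> J \<inter> - O1" and ex2: "\<exists>p\<ge>1. (g^^p) q2 = q2" by (rule bexE)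
  from ex2 obtain p2 where p2a: "p2 \<ge> 1" "(g^^p2) q2 = q2" by (elim exE conjE)
  have q2: "q2 \<in> J" "q2 \<notin> O1" "p2 \<ge> 1" "(g^^p2) q2 = q2" using q2a p2a by simp_all
  define O2 where "O2 = range (\<lambda>i. (g^^i) q2)"
  have fO2: "finite O2" unfolding O2_def by (rule orbit_finite[OF q2(3) q2(4)])
  have disj: "O1 \<inter> O2 = {}"
  proof (rule ccontr)
    assume "O1 \<inter> O2 \<noteq> {}"
    then obtain z where "z \<in> O1" "z \<in> O2" by blast
    then obtain i j where "z = (g^^j) q1" "z = (g^^i) q2" unfolding O1_def O2_def by blast
    then have ij: "(g^^i) q2 = (g^^j) q1" by simp
    have le0: "1*i \<le> p2*i" using q2(3) by (rule mult_le_mono1)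
    have "p2*(i+1) = p2 + p2*i" by (simp add: algebra_simps)
    then have le: "i \<le> p2 * (i+1)" using le0 by linarith
    have "q2 = (g^^(p2 * (i+1))) q2" by (rule sym, rule funpow_fix[OF q2(4)])
    also have "\<dots> = (g^^(p2*(i+1) - i)) ((g^^i) q2)"
    proof -
      have "p2 * (i+1) = (p2*(i+1) - i) + i" using le by simp
      then have "(g^^(p2 * (i+1))) q2 = (g^^((p2*(i+1) - i) + i)) q2" by simp
      then show ?thesis by (simp only: funpow_add o_apply)
    qed
    also have "\<dots> = (g^^(p2*(i+1) - i + j)) q1" using ij by (simp add: funpow_add)
    finally show False using q2(2) unfolding O1_def by blast
  qed
  obtain d where d: "d > 0" "\<forall>u\<in>O1. \<forall>v\<in>O2. d \<le> dist u v"
    using separate_closed_compact[OF finite_imp_closed[OF fO1] finite_imp_compact[OF fO2] disj] by blast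
  define \<delta> where "\<delta> = d/8"
  have \<delta>: "\<delta> > 0" using d unfolding \<delta>_def by simp
  have far: "\<And>x. \<exists>q\<in>J. \<forall>i. 4*\<delta> \<le> dist x ((g^^i) q)"
  proof -
    fix x
    show "\<exists>q\<in>J. \<forall>i. 4*\<delta> \<le> dist x ((g^^i) q)"
    proof (cases "\<forall>i. 4*\<delta> \<le> dist x ((g^^i) q1)")
      case True then show ?thesis using q1 by blast
    next
      case False
      then obtain i where i: "dist x ((g^^i) q1) < 4*\<delta>" by (meson not_le)
      have "\<forall>j. 4*\<delta> \<le> dist x ((g^^j) q2)"
      proof (rule ccontr)
        assume "\<not> (\<forall>j. 4*\<delta> \<le> dist x ((g^^j) q2))"
        then obtain j where j: "dist x ((g^^j) q2) < 4*\<delta>" by (meson not_le)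
        have "d \<le> dist ((g^^i) q1) ((g^^j) q2)" using d unfolding O1_def O2_def by blast
        moreover have "dist ((g^^i) q1) ((g^^j) q2) \<le> dist x ((g^^i) q1) + dist x ((g^^j) q2)"
          by (rule dist_triangle3)
        ultimately show False using i j unfolding \<delta>_def by linarith
      qed
      then show ?thesis using q2 by blast
    qed
  qed
  show ?thesis
  proof (intro exI[of _ \<delta>] conjI \<delta> ballI allI impI)
    fix x U assume xJ: "x \<in> J" and U: "openin (top_of_set J) U \<and> x \<in> U"
    obtain q where q: "q \<in> J" "\<forall>i. 4*\<delta> \<le> dist x ((g^^i) q)" using far by blast
    define V where "V = U \<inter> (J \<inter> ball x \<delta>)"
    have oV: "openin (top_of_set J) V" unfolding V_def
      using U by (intro openin_Int openin_open_Int) auto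
    have xV: "x \<in> V" using U xJ \<delta> unfolding V_def by auto
    obtain p n where p: "p \<in> V" "n \<ge> 1" "(g^^n) p = p" using dp[OF oV xV] by blast
    define W where "W = (\<Inter>i\<in>{..n}. J \<inter> (g^^i) -` ball ((g^^i) q) \<delta>)"
    have oW: "openin (top_of_set J) W" unfolding W_def
    proof (rule openin_INT2)
      fix i assume "i \<in> {..n}"
      show "openin (top_of_set J) (J \<inter> (g^^i) -` ball ((g^^i) q) \<delta>)"
        using ip[of i] by (intro continuous_openin_preimage[where T=UNIV]) auto
    qed auto
    have qW: "q \<in> W" using q \<delta> unfolding W_def by auto
    have neV: "V \<noteq> {}" and neW: "W \<noteq> {}" using xV qW by auto
    have "\<exists>n\<ge>1. (g^^n) ` V \<inter> W \<noteq> {}"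
      using tr[unfolded top_transitive_def, rule_format, OF conjI[OF oV conjI[OF neV conjI[OF oW neW]]]] .
    then obtain k where "k \<ge> 1" "(g^^k) ` V \<inter> W \<noteq> {}" by blast
    then obtain y where k: "k \<ge> 1" "y \<in> V" "(g^^k) y \<in> W" by blast
    define N where "N = n * (k div n + 1)"
    have e1: "k = n*(k div n) + k mod n" by simp
    have e2: "k mod n < n" using p(2) by simp
    have e3: "N = n*(k div n) + n" by (simp add: N_def algebra_simps)
    have kN: "k < N" using e1 e2 e3 by linarith
    have Nk: "N - k \<le> n" using e1 e2 e3 by linarith
    have N1: "N \<ge> 1" using kN k by simp
    have gy: "(g^^N) y = (g^^(N-k)) ((g^^k) y)"
    proof -
      have "N = (N-k) + k" using kN by simp
      then have "(g^^N) y = (g^^((N-k) + k)) y" by simp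
      then show ?thesis by (simp only: funpow_add o_apply)
    qed
    have d1: "dist ((g^^N) y) ((g^^(N-k)) q) < \<delta>"
      using k(3) Nk unfolding gy W_def by (auto simp: dist_commute)
    have gp: "(g^^N) p = p" unfolding N_def using funpow_fix[OF p(3)] by blast
    have d2: "dist p x < \<delta>" using p(1) unfolding V_def by (auto simp: dist_commute)
    have d3: "4*\<delta> \<le> dist x ((g^^(N-k)) q)" using q by blast
    have tri: "dist x ((g^^(N-k)) q) \<le> dist x p + dist p ((g^^N) y) + dist ((g^^N) y) ((g^^(N-k)) q)"
      using dist_triangle[of x "(g^^(N-k)) q" p] dist_triangle[of p "(g^^(N-k)) q" "(g^^N) y"] by linarith
    have big: "2*\<delta> < dist ((g^^N) p) ((g^^N) y)" using d1 d2 d3 tri gp by (simp add: dist_commute)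
    have "dist ((g^^N) p) ((g^^N) y) \<le> dist ((g^^N) x) ((g^^N) p) + dist ((g^^N) x) ((g^^N) y)"
      by (rule dist_triangle3)
    then have "\<delta> < dist ((g^^N) x) ((g^^N) p) \<or> \<delta> < dist ((g^^N) x) ((g^^N) y)" using big by linarith
    moreover have "p \<in> U" "y \<in> U" using p(1) k(2) unfolding V_def by auto
    ultimately show "\<exists>y\<in>U. \<exists>N\<ge>1. \<delta> < \<bar>(g^^N) x - (g^^N) y\<bar>"
      using N1 by (auto simp: dist_real_def)
  qed
qed



lemma nacomp_props:
  assumes "\<And>n. n \<ge> 1 \<Longrightarrow> continuous_on J (f n)" "\<And>n. n \<ge> 1 \<Longrightarrow> f n ` J = J"
  shows "continuous_on J (nacomp f n) \<and> nacomp f n ` J \<subseteq> J"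
proof (induction n)
  case 0 then show ?case by (simp add: continuous_on_id)
next
  case (Suc n)
  then have c: "continuous_on J (nacomp f n)" and s: "nacomp f n ` J \<subseteq> J" by auto
  have "continuous_on J (f (Suc n) \<circ> nacomp f n)"
    by (rule continuous_on_compose[OF c continuous_on_subset[OF assms(1) s]]) simp
  moreover have "(f (Suc n) \<circ> nacomp f n) ` J \<subseteq> J" using s assms(2)[of "Suc n"]
    by (auto simp: image_subset_iff)
  ultimately show ?case by simp
qed

lemma nacomp_shift:
  assumes "\<And>n. n \<ge> 1 \<Longrightarrow> f (n + m) = f n"
  shows "nacomp f (m + n) = nacomp f n \<circ> nacomp f m"
proof (induction n)
  case 0 then show ?case by simp
next
  case (Suc n)
  have "nacomp f (m + Suc n) = f (Suc n + m) \<circ> nacomp f (m + n)" by (simp add: add.commute)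
  also have "\<dots> = f (Suc n) \<circ> (nacomp f n \<circ> nacomp f m)" using assms[of "Suc n"] Suc by (simp add: comp_def)
  finally show ?case by (simp add: o_assoc)
qed

lemma nacomp_pow:
  assumes "\<And>n. n \<ge> 1 \<Longrightarrow> f (n + m) = f n"
  shows "nacomp f (m * k) = nacomp f m ^^ k"
proof (induction k)
  case 0 then show ?case by simp
next
  case (Suc k)
  have "nacomp f (m * Suc k) = nacomp f (m + m * k)" by simp
  also have "\<dots> = nacomp f (m*k) \<circ> nacomp f m" by (rule nacomp_shift[where f=f and m=m, OF assms])
  also have "\<dots> = nacomp f m ^^ Suc k" by (simp only: funpow_Suc_right Suc)
  finally show ?case .
qed

theorem mainTheorem18:
  fixes J :: "real set" and f :: "nat \<Rightarrow> real \<Rightarrow> real" and m :: nat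
  assumes "nondegenerate_interval J"
    and "m \<ge> 1"
    and "\<And>n. n \<ge> 1 \<Longrightarrow> f (n + m) = f n"
    and "\<And>n. n \<ge> 1 \<Longrightarrow> continuous_on J (f n)"
    and "\<And>n. n \<ge> 1 \<Longrightarrow> f n ` J = J"
    and "top_transitive J (nacomp f m)"
  shows "na_devaney_chaotic J f"
proof -
  define g where "g = nacomp f m"
  obtain a b where J: "is_interval J" "a \<in> J" "b \<in> J" "a < b"
    using assms(1) unfolding nondegenerate_interval_def by blast
  have cg: "continuous_on J g" "g ` J \<subseteq> J" using nacomp_props[OF assms(4) assms(5)] unfolding g_def by auto
  have tr: "top_transitive J g" using assms(6) unfolding g_def .
  have pw: "\<And>k. nacomp f (m * k) = g ^^ k" unfolding g_def by (rule nacomp_pow[where f=f and m=m, OF assms(3)])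
  have T: "na_transitive J f"
    unfolding na_transitive_def
  proof (intro allI impI)
    fix U V assume h: "openin (top_of_set J) U \<and> U \<noteq> {} \<and> openin (top_of_set J) V \<and> V \<noteq> {}"
    then obtain n where n: "n \<ge> 1" "(g^^n) ` U \<inter> V \<noteq> {}" using tr unfolding top_transitive_def by blast
    then have "nacomp f (m*n) ` U \<inter> V \<noteq> {}" using pw by simp
    moreover have "m * n \<ge> 1" using n assms(2) by simp
    ultimately show "\<exists>n\<ge>1. nacomp f n ` U \<inter> V \<noteq> {}" by blast
  qed
  have P: "na_dense_periodic J f"
    unfolding na_dense_periodic_def
  proof
    fix x assume xJ: "x \<in> J"
    show "x \<in> closure {x \<in> J. na_periodic_point f x}"
      unfolding closure_approachable
    proof (intro allI impI)
      fix e :: real assume e: "e > 0"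
      have o: "openin (top_of_set J) (J \<inter> ball x e)" by (rule openin_open_Int) simp
      have "x \<in> J \<inter> ball x e" using xJ e by simp
      from dense_per[OF J cg tr o this] obtain y where y: "y \<in> J \<inter> ball x e"
        and ex: "\<exists>p\<ge>1. (g^^p) y = y" by (rule bexE)
      from ex obtain p where p: "p \<ge> 1" "(g^^p) y = y" by (elim exE conjE)
      have "na_periodic_point f y"
        unfolding na_periodic_point_def
      proof (intro exI[of _ "m*p"] conjI allI impI)
        show "1 \<le> m * p" using p assms(2) by simp
        fix k :: nat
        have "nacomp f (m * p * k) y = (g ^^ (p*k)) y" using pw[of "p*k"] by (simp add: mult.assoc)
        also have "\<dots> = y" by (rule funpow_fix[OF p(2)])
        finally show "nacomp f (m * p * k) y = y" .
      qed
      then show "\<exists>y\<in>{x \<in> J. na_periodic_point f x}. dist y x < e"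
        using y by (auto simp: dist_commute)
    qed
  qed
  obtain \<delta> where d: "\<delta> > 0" "\<forall>x\<in>J. \<forall>U. openin (top_of_set J) U \<and> x \<in> U \<longrightarrow>
          (\<exists>y\<in>U. \<exists>N\<ge>1. \<delta> < \<bar>(g^^N) x - (g^^N) y\<bar>)"
    using sens[OF J cg tr] by blast
  have S: "na_sensitive J f"
    unfolding na_sensitive_def
  proof (intro exI[of _ \<delta>] conjI ballI allI impI)
    show "\<delta> > 0" by (rule d(1))
    fix x U assume x: "x \<in> J" and U: "openin (top_of_set J) U \<and> x \<in> U"
    from d(2) x U obtain y where y: "y \<in> U" and ex: "\<exists>N\<ge>1. \<delta> < \<bar>(g^^N) x - (g^^N) y\<bar>" by blast
    from ex obtain N where N: "N \<ge> 1" "\<delta> < \<bar>(g^^N) x - (g^^N) y\<bar>" by (elim exE conjE)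
    have "\<delta> < \<bar>nacomp f (m*N) x - nacomp f (m*N) y\<bar>" using N pw by simp
    moreover have "m*N \<ge> 1" using N assms(2) by simp
    ultimately show "\<exists>y\<in>U. \<exists>n\<ge>1. \<bar>nacomp f n x - nacomp f n y\<bar> > \<delta>" using y by blast
  qed
  show ?thesis unfolding na_devaney_chaotic_def using T P S by blast
qed

end
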